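(* Let $d\ge1$ and let $\mathcal T_d=(t_{i-j})_{0\le i,j\le d-1}$ be an invertible complex Toeplitz matrix. Choose $t_+,t_-\in\mathbb C\setminus\{0\}$ with $t_++t_-=t_0$ and arbitrary $\gamma,\delta\in\mathbb C$, and set $S_{-1}=X^{2d+1}+1$ and $$S_0=T_{\gamma,\delta}=-t_--t_{-1}X-\dots-t_{-d+1}X^{d-1}+\gamma X^d+\delta X^{d+1}+t_{d-1}X^{d+2}+\dots+t_1X^{2d}+t_+X^{2d+1}.$$ Let $(S_j)$ be the symmetric subresultants of $S_{-1},S_0$ (degree $2d+1$). Then $S_d(0)\neq0$, and if $U=\sum_{i=0}^{d-1}u_iX^i$, $V=\sum_{i=0}^{d-1}v_iX^i\in\mathbb C[X]$ are any polynomials of degree at most $d-1$ with $X^{d-1}S_d=U\,(X^{2d+1}+1)+V\,T_{\gamma,\delta}$, then $\mathcal T_d^T(v_0,\dots,v_{d-1})^T=(0,\dots,0,-S_d(0))^T$; equivalently, the first column of $\mathcal T_d^{-1}$ is $-\frac{1}{S_d(0)}(v_{d-1},v_{d-2},\dots,v_0)^T$.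
   Context: Symmetric subresultants: for $A=\sum_{i=0}^n a_iX^i$, $B=\sum_{i=0}^n b_iX^i$ with $\deg A=n\ge1$ ($B$ of formal degree $n$), put $a_i=b_i=0$ for $i<0$ or $i>n$; for $1\le j\le n$, $0\le\ell\le n-j$, $\mathrm{Sylv}_{j,\ell}$ is the $2j\times2j$ matrix whose $r$-th row ($1\le r\le j$) is $(a_{1-r},\dots,a_{j-1-r},\ a_{j-r+\ell},\ a_{n+1-r},\dots,a_{n+j-r})$ and whose $(j+r)$-th row is the same with $b$ in place of $a$; $S_{-1}=A$, $S_0=B$, $S_j=\sum_{\ell=0}^{n-j}\det(\mathrm{Sylv}_{j,\ell})X^\ell$ for $1\le j\le n$. Here $n=2d+1$. (Such $U,V$ exist by the Bezout-type relation for symmetric subresultants.) *)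

theory Defs
  imports "HOL-Computational_Algebra.Polynomial" "Jordan_Normal_Form.Determinant"
begin

definition scoef :: "nat \<Rightarrow> 'a::comm_ring_1 poly \<Rightarrow> int \<Rightarrow> 'a" where
  "scoef n p k = (if 0 \<le> k \<and> k \<le> int n then coeff p (nat k) else 0)"

(* entry of the r-th row pattern (r = 1..j), column c = 1..2j, of Sylv_{j,l} *)
definition sylv_entry :: "nat \<Rightarrow> 'a::comm_ring_1 poly \<Rightarrow> nat \<Rightarrow> nat \<Rightarrow> nat \<Rightarrow> nat \<Rightarrow> 'a" where
  "sylv_entry n p j l r c =
     (if c \<le> j - 1 then scoef n p (int c - int r)
      else if c = j then scoef n p (int j - int r + int l)
      else scoef n p (int n + int (c - j) - int r))"

definition Sylv :: "nat \<Rightarrow> 'a::comm_ring_1 poly \<Rightarrow> 'a poly \<Rightarrow> nat \<Rightarrow> nat \<Rightarrow> 'a mat" where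
  "Sylv n A B j l = mat (2*j) (2*j) (\<lambda>(i,k).
      if i < j then sylv_entry n A j l (i+1) (k+1)
      else sylv_entry n B j l (i-j+1) (k+1))"

definition sym_subres :: "nat \<Rightarrow> 'a::comm_ring_1 poly \<Rightarrow> 'a poly \<Rightarrow> nat \<Rightarrow> 'a poly" where
  "sym_subres n A B j = (\<Sum>l\<le>n-j. monom (det (Sylv n A B j l)) l)"

definition toeplitz :: "nat \<Rightarrow> (int \<Rightarrow> complex) \<Rightarrow> complex mat" where
  "toeplitz d t = mat d d (\<lambda>(i,j). t (int i - int j))"

definition Tcoef :: "nat \<Rightarrow> (int \<Rightarrow> complex) \<Rightarrow> complex \<Rightarrow> complex \<Rightarrow> complex \<Rightarrow> complex \<Rightarrow> nat \<Rightarrow> complex" where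
  "Tcoef d t tp tm \<gamma> \<delta> k =
     (if k = 0 then - tm
      else if k < d then - t (- int k)
      else if k = d then \<gamma>
      else if k = d + 1 then \<delta>
      else if k \<le> 2*d then t (int (2*d+1) - int k)
      else if k = 2*d+1 then tp else 0)"

definition Tgd :: "nat \<Rightarrow> (int \<Rightarrow> complex) \<Rightarrow> complex \<Rightarrow> complex \<Rightarrow> complex \<Rightarrow> complex \<Rightarrow> complex poly" where
  "Tgd d t tp tm \<gamma> \<delta> = (\<Sum>k\<le>2*d+1. monom (Tcoef d t tp tm \<gamma> \<delta> k) k)"

end

theory Submission
  imports Defs
begin


lemma coeff_Tgd: "coeff (Tgd d t tp tm g e) k = Tcoef d t tp tm g e k"
  unfolding Tgd_def by (auto simp: coeff_sum coeff_monom Tcoef_def)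

lemma coeff_A: "coeff (monom 1 n + 1 :: 'a::comm_ring_1 poly) k = (if k = n then 1 else 0) + (if k = 0 then 1 else 0)"
  by (simp add: coeff_monom coeff_1)

lemma coeff_S: "coeff (sym_subres n A B j) l = (if l \<le> n - j then det (Sylv n A B j l) else 0)"
  unfolding sym_subres_def by (auto simp: coeff_sum coeff_monom)

lemma coeff_mult_bound:
  assumes "degree p < N"
  shows "coeff (p*q) m = (\<Sum>i<N. coeff p i * (if i \<le> m then coeff q (m-i) else 0))"
proof -
  define g where "g i = coeff p i * (if i \<le> m then coeff q (m-i) else 0)" for i
  have "coeff (p*q) m = (\<Sum>i\<le>m. g i)" unfolding coeff_mult g_def by simp
  also have "\<dots> = (\<Sum>i<N+m+1. g i)"
    by (rule sum.mono_neutral_cong_left) (auto simp: g_def)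
  also have "\<dots> = (\<Sum>i<N. g i)"
    using assms by (intro sum.mono_neutral_cong_right) (auto simp: g_def coeff_eq_0)
  finally show ?thesis by (simp add: g_def)
qed



lemma lin_eq:
  fixes d :: nat and t :: "int \<Rightarrow> complex" and tp tm g e :: complex
  assumes d: "d \<ge> 1" and tpm: "tp + tm = t 0"
    and U: "degree U \<le> d - 1" and V: "degree V \<le> d - 1"
    and eq: "monom 1 (d-1) * S = U * (monom 1 (2*d+1) + 1) + V * Tgd d t tp tm g e"
    and S: "\<And>l. l > d + 1 \<Longrightarrow> coeff S l = 0"
    and k: "k < d"
  shows "(\<Sum>i<d. t (int i - int k) * coeff V i) = (if k = d - 1 then - coeff S 0 else 0)"
proof -
  let ?n = "2*d+1"
  let ?B = "Tgd d t tp tm g e"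
  have c1: "coeff (monom 1 (d-1) * S) k = (if k = d - 1 then coeff S 0 else 0)"
    using k by (auto simp: coeff_monom_mult)
  have c2: "coeff (monom 1 (d-1) * S) (k + ?n) = 0"
    using k d by (auto simp: coeff_monom_mult intro!: S)
  have r1: "coeff (monom 1 (d-1) * S) k = coeff U k + coeff (V * ?B) k"
    unfolding eq using k by (simp add: distrib_left coeff_monom_mult mult.commute[of U])
  have r2: "coeff (monom 1 (d-1) * S) (k + ?n) = coeff U k + coeff (V * ?B) (k + ?n)"
  proof -
    have "coeff U (k + ?n) = 0" using U d by (intro coeff_eq_0) auto
    thus ?thesis
      unfolding eq using k by (simp add: distrib_left coeff_monom_mult mult.commute[of U])
  qed
  have dV: "degree V < d" using V d by auto
  have diff: "coeff (V * ?B) k - coeff (V * ?B) (k + ?n) = (if k = d - 1 then coeff S 0 else 0)"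
    using c1 c2 r1 r2 by (auto simp: algebra_simps)
  have "coeff (V * ?B) k - coeff (V * ?B) (k + ?n)
     = (\<Sum>i<d. coeff V i * ((if i \<le> k then Tcoef d t tp tm g e (k-i) else 0)
          - Tcoef d t tp tm g e (k + ?n - i)))"
    unfolding coeff_mult_bound[OF dV] coeff_Tgd using k
    by (simp add: sum_subtractf[symmetric] coeff_Tgd algebra_simps)
  also have "\<dots> = (\<Sum>i<d. - (t (int i - int k) * coeff V i))"
  proof (rule sum.cong[OF refl])
    fix i assume i: "i \<in> {..<d}"
    have "(if i \<le> k then Tcoef d t tp tm g e (k-i) else 0) - Tcoef d t tp tm g e (k + ?n - i)
        = - t (int i - int k)"
    proof (cases i k rule: linorder_cases)
      case less
      then show ?thesis using i k by (auto simp: Tcoef_def)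
    next
      case equal
      then show ?thesis using i k tpm[symmetric] by (auto simp: Tcoef_def)
    next
      case greater
      then show ?thesis using i k by (auto simp: Tcoef_def)
    qed
    thus "coeff V i * ((if i \<le> k then Tcoef d t tp tm g e (k-i) else 0)
          - Tcoef d t tp tm g e (k + ?n - i)) = - (t (int i - int k) * coeff V i)"
      by (simp only: mult_minus_left[symmetric] mult.commute[of "t _"]) simp
  qed
  finally have h: "(\<Sum>i<d. - (t (int i - int k) * coeff V i)) = (if k = d - 1 then coeff S 0 else 0)"
    using diff by metis
  have "(\<Sum>i<d. t (int i - int k) * coeff V i) = - (if k = d - 1 then coeff S 0 else 0)"
    unfolding h[symmetric] sum_negf by simp
  thus ?thesis by simp
qed



lemma sylv_entry0: "sylv_entry n p j 0 r c = (if c \<le> j then scoef n p (int c - int r) else scoef n p (int n + int (c - j) - int r))"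
  unfolding sylv_entry_def by auto

lemma scoefA: "scoef n (monom 1 n + 1 :: 'a::comm_ring_1 poly) m = (if m = int n then 1 else 0) + (if m = 0 then 1 else 0)"
  unfolding scoef_def coeff_A by auto

lemma sylv_block:
  fixes t :: "int \<Rightarrow> complex" and tp tm g e :: complex
  assumes d: "d \<ge> 1" and tpm: "tp + tm = t 0"
  defines "B \<equiv> Tgd d t tp tm g e"
  defines "P \<equiv> mat d d (\<lambda>(i,k). scoef (2*d+1) B (int k - int i))"
  shows "Sylv (2*d+1) (monom 1 (2*d+1) + 1) B d 0 = four_block_mat (1\<^sub>m d) (1\<^sub>m d) P (P + toeplitz d t)"
proof (rule eq_matI)
  show "dim_row (Sylv (2*d+1) (monom 1 (2*d+1) + 1) B d 0) = dim_row (four_block_mat (1\<^sub>m d) (1\<^sub>m d) P (P + toeplitz d t))"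
    by (simp add: Sylv_def P_def toeplitz_def)
  show "dim_col (Sylv (2*d+1) (monom 1 (2*d+1) + 1) B d 0) = dim_col (four_block_mat (1\<^sub>m d) (1\<^sub>m d) P (P + toeplitz d t))"
    by (simp add: Sylv_def P_def toeplitz_def)
  fix i k assume i: "i < dim_row (four_block_mat (1\<^sub>m d) (1\<^sub>m d) P (P + toeplitz d t))"
    and k: "k < dim_col (four_block_mat (1\<^sub>m d) (1\<^sub>m d) P (P + toeplitz d t))"
  hence i2: "i < 2*d" and k2: "k < 2*d" by (auto simp: P_def toeplitz_def)
  have cB: "scoef (2*d+1) B m = (if 0 \<le> m \<and> m \<le> int (2*d+1) then Tcoef d t tp tm g e (nat m) else 0)" for m
    unfolding B_def scoef_def coeff_Tgd ..
  have S: "Sylv (2*d+1) (monom 1 (2*d+1) + 1) B d 0 $$ (i, k) =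
     (if i < d then (if k < d then scoef (2*d+1) (monom 1 (2*d+1) + 1) (int k - int i)
                     else scoef (2*d+1) (monom 1 (2*d+1) + 1) (int (2*d+1) + int (k - d) - int i))
      else (if k < d then scoef (2*d+1) B (int k - int (i - d))
                     else scoef (2*d+1) B (int (2*d+1) + int (k - d) - int (i - d))))"
    using i2 k2 unfolding Sylv_def sylv_entry0 by (auto simp: of_nat_diff intro!: arg_cong[where f="scoef _ _"])
  have F: "four_block_mat (1\<^sub>m d) (1\<^sub>m d) P (P + toeplitz d t) $$ (i, k) =
     (if i < d then (if k < d then (if i = k then 1 else 0) else (if i = k - d then 1 else 0))
      else (if k < d then P $$ (i - d, k) else P $$ (i-d, k-d) + t (int (i-d) - int (k-d))))"
    using i2 k2 by (auto simp: P_def toeplitz_def)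
  show "Sylv (2*d+1) (monom 1 (2*d+1) + 1) B d 0 $$ (i, k) = four_block_mat (1\<^sub>m d) (1\<^sub>m d) P (P + toeplitz d t) $$ (i, k)"
  proof (cases "i < d"; cases "k < d")
    assume "i < d" "k < d" thus ?thesis using i2 k2 unfolding S F scoefA by auto
  next
    assume "i < d" "\<not> k < d" thus ?thesis using i2 k2 unfolding S F scoefA by auto
  next
    assume "\<not> i < d" "k < d" thus ?thesis using i2 k2 unfolding S F by (simp add: P_def)
  next
    assume a: "\<not> i < d" "\<not> k < d"
    define i' where "i' = i - d"
    define k' where "k' = k - d"
    have i': "i' < d" and k': "k' < d" using a i2 k2 by (auto simp: i'_def k'_def)
    have "scoef (2*d+1) B (int (2*d+1) + int k' - int i') = scoef (2*d+1) B (int k' - int i') + t (int i' - int k')"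
    proof (cases i' k' rule: linorder_cases)
      case less
      then show ?thesis using i' k' unfolding cB by (auto simp: Tcoef_def nat_diff_distrib)
    next
      case equal
      then show ?thesis using i' k' tpm[symmetric] unfolding cB by (auto simp: Tcoef_def)
    next
      case greater
      then show ?thesis using i' k' unfolding cB by (auto simp: Tcoef_def nat_diff_distrib)
    qed
    thus ?thesis using a i' k' unfolding S F i'_def[symmetric] k'_def[symmetric] by (simp add: P_def)
  qed
qed



lemma det_block:
  fixes P T :: "complex mat"
  assumes P: "P \<in> carrier_mat d d" and T: "T \<in> carrier_mat d d"
  shows "det (four_block_mat (1\<^sub>m d) (1\<^sub>m d) P (P + T)) = det T"
proof -
  have "four_block_mat (1\<^sub>m d) (1\<^sub>m d) P (P + T) =
      four_block_mat (1\<^sub>m d) (0\<^sub>m d d) P T * four_block_mat (1\<^sub>m d) (1\<^sub>m d) (0\<^sub>m d d) (1\<^sub>m d)"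
  proof -
    have "four_block_mat (1\<^sub>m d) (0\<^sub>m d d) P T * four_block_mat (1\<^sub>m d) (1\<^sub>m d) (0\<^sub>m d d) (1\<^sub>m d)
      = four_block_mat (1\<^sub>m d * 1\<^sub>m d + 0\<^sub>m d d * 0\<^sub>m d d) (1\<^sub>m d * 1\<^sub>m d + 0\<^sub>m d d * 1\<^sub>m d)
          (P * 1\<^sub>m d + T * 0\<^sub>m d d) (P * 1\<^sub>m d + T * 1\<^sub>m d)"
      by (rule mult_four_block_mat) (use P T in auto)
    thus ?thesis using P T by simp
  qed
  also have "det \<dots> = det (four_block_mat (1\<^sub>m d) (0\<^sub>m d d) P T) * det (four_block_mat (1\<^sub>m d) (1\<^sub>m d) (0\<^sub>m d d) (1\<^sub>m d))"
    by (rule det_mult[where n="d+d"]) (use P T in auto)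
  also have "det (four_block_mat (1\<^sub>m d) (0\<^sub>m d d) P T) = det T"
    using det_four_block_mat_upper_right_zero[of "1\<^sub>m d" d "0\<^sub>m d d" d P T] P T by simp
  also have "det (four_block_mat (1\<^sub>m d) (1\<^sub>m d) (0\<^sub>m d d) (1\<^sub>m d) :: complex mat) = 1"
    using det_four_block_mat_lower_left_zero[of "1\<^sub>m d :: complex mat" d "1\<^sub>m d" d "0\<^sub>m d d" "1\<^sub>m d"] by simp
  finally show ?thesis by simp
qed

lemma invertible_det_nz:
  assumes "invertible_mat (A :: complex mat)" "A \<in> carrier_mat d d"
  shows "det A \<noteq> 0"
proof -
  from assms obtain Bm where 1: "A * Bm = 1\<^sub>m d" and 2: "Bm * A = 1\<^sub>m (dim_row Bm)"
    unfolding invertible_mat_def inverts_mat_def by auto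
  have "dim_col Bm = d" using arg_cong[OF 1, of dim_col] by simp
  moreover have "dim_row Bm = d" using arg_cong[OF 2, of dim_col] assms(2) by simp
  ultimately have Bc: "Bm \<in> carrier_mat d d" by auto
  have "det A * det Bm = 1" using det_mult[OF assms(2) Bc] 1 by simp
  thus ?thesis by auto
qed

theorem mainTheorem11:
  fixes d :: nat and t :: "int \<Rightarrow> complex" and tp tm \<gamma> \<delta> :: complex
  assumes "d \<ge> 1"
    and "invertible_mat (toeplitz d t)"
    and "tp \<noteq> 0" and "tm \<noteq> 0" and "tp + tm = t 0"
  shows "poly (sym_subres (2*d+1) (monom 1 (2*d+1) + 1) (Tgd d t tp tm \<gamma> \<delta>) d) 0 \<noteq> 0
    \<and> (\<forall>U V :: complex poly. degree U \<le> d - 1 \<longrightarrow> degree V \<le> d - 1 \<longrightarrow>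
        monom 1 (d-1) * sym_subres (2*d+1) (monom 1 (2*d+1) + 1) (Tgd d t tp tm \<gamma> \<delta>) d
          = U * (monom 1 (2*d+1) + 1) + V * Tgd d t tp tm \<gamma> \<delta> \<longrightarrow>
        transpose_mat (toeplitz d t) *\<^sub>v vec d (\<lambda>i. coeff V i)
          = vec d (\<lambda>i. if i = d - 1
               then - poly (sym_subres (2*d+1) (monom 1 (2*d+1) + 1) (Tgd d t tp tm \<gamma> \<delta>) d) 0
               else 0)
        \<and> (\<forall>Ti \<in> carrier_mat d d. toeplitz d t * Ti = 1\<^sub>m d \<longrightarrow>
             col Ti 0 = vec d (\<lambda>i. - coeff V (d - 1 - i)
               / poly (sym_subres (2*d+1) (monom 1 (2*d+1) + 1) (Tgd d t tp tm \<gamma> \<delta>) d) 0)))"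
proof -
  let ?S = "sym_subres (2*d+1) (monom 1 (2*d+1) + 1) (Tgd d t tp tm \<gamma> \<delta>) d"
  let ?T = "toeplitz d t"
  have Tc: "?T \<in> carrier_mat d d" by (simp add: toeplitz_def)
  define P where "P = mat d d (\<lambda>(i,k). scoef (2*d+1) (Tgd d t tp tm \<gamma> \<delta>) (int k - int i))"
  have S0: "poly ?S 0 = det ?T"
    unfolding poly_0_coeff_0 coeff_S
    using sylv_block[where d=d and t=t and tp=tp and tm=tm and g=\<gamma> and e=\<delta>, OF assms(1) assms(5)] det_block[of P d ?T] Tc
    by (simp add: P_def)
  have nz: "poly ?S 0 \<noteq> 0" unfolding S0 by (rule invertible_det_nz[OF assms(2) Tc])
  have Sdeg: "coeff ?S l = 0" if "l > d + 1" for l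
    using that unfolding coeff_S by auto
  show ?thesis
  proof (intro conjI nz allI impI ballI)
    fix U V :: "complex poly"
    assume U: "degree U \<le> d - 1" and V: "degree V \<le> d - 1"
      and eq: "monom 1 (d-1) * ?S = U * (monom 1 (2*d+1) + 1) + V * Tgd d t tp tm \<gamma> \<delta>"
    have L: "(\<Sum>i<d. t (int i - int k) * coeff V i) = (if k = d - 1 then - coeff ?S 0 else 0)" if "k < d" for k
      by (rule lin_eq[OF assms(1) assms(5) U V eq]) (use that Sdeg in auto)
    show 1: "transpose_mat ?T *\<^sub>v vec d (\<lambda>i. coeff V i)
          = vec d (\<lambda>i. if i = d - 1 then - poly ?S 0 else 0)"
    proof (rule eq_vecI)
      fix k assume "k < dim_vec (vec d (\<lambda>i. if i = d - 1 then - poly ?S 0 else 0))"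
      hence k: "k < d" by simp
      have "(transpose_mat ?T *\<^sub>v vec d (\<lambda>i. coeff V i)) $ k = (\<Sum>i<d. t (int i - int k) * coeff V i)"
        using k by (simp add: toeplitz_def scalar_prod_def atLeast0LessThan)
      also have "\<dots> = (if k = d - 1 then - poly ?S 0 else 0)"
        using L[OF k] by (simp add: poly_0_coeff_0)
      finally show "(transpose_mat ?T *\<^sub>v vec d (\<lambda>i. coeff V i)) $ k = vec d (\<lambda>i. if i = d - 1 then - poly ?S 0 else 0) $ k"
        using k by simp
    qed (simp add: toeplitz_def)
    fix Ti assume Ti: "Ti \<in> carrier_mat d d" and inv: "?T * Ti = 1\<^sub>m d"
    have inv2: "Ti * ?T = 1\<^sub>m d" by (rule mat_mult_left_right_inverse[OF Tc Ti inv])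
    define w where "w = vec d (\<lambda>i. - coeff V (d - 1 - i) / poly ?S 0)"
    have wc: "w \<in> carrier_vec d" by (simp add: w_def)
    have Tw: "?T *\<^sub>v w = unit_vec d 0"
    proof (rule eq_vecI)
      fix i assume "i < dim_vec (unit_vec d 0)"
      hence i: "i < d" by simp
      have "(\<Sum>j<d. t (int i - int j) * coeff V (d - 1 - j)) = (\<Sum>j<d. t (int j - int (d - 1 - i)) * coeff V j)"
      proof -
        have "(\<Sum>j<d. t (int i - int j) * coeff V (d - 1 - j))
            = (\<Sum>j<d. (\<lambda>k. t (int k - int (d - 1 - i)) * coeff V k) (d - Suc j))"
          using i by (intro sum.cong refl) (auto simp: of_nat_diff)
        also have "\<dots> = (\<Sum>j<d. t (int j - int (d - 1 - i)) * coeff V j)"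
          by (rule sum.nat_diff_reindex)
        finally show ?thesis .
      qed
      also have "\<dots> = (if i = 0 then - poly ?S 0 else 0)"
        using L[of "d - 1 - i"] i assms(1) by (auto simp: poly_0_coeff_0)
      finally have h: "(\<Sum>j<d. t (int i - int j) * coeff V (d - 1 - j)) = (if i = 0 then - poly ?S 0 else 0)" .
      have "(?T *\<^sub>v w) $ i = - (\<Sum>j<d. t (int i - int j) * coeff V (d - 1 - j)) / poly ?S 0"
        using i by (simp add: toeplitz_def w_def scalar_prod_def atLeast0LessThan sum_divide_distrib sum_negf)
      also have "\<dots> = unit_vec d 0 $ i" unfolding h using i nz by auto
      finally show "(?T *\<^sub>v w) $ i = unit_vec d 0 $ i" .
    qed (simp add: toeplitz_def)
    have "col Ti 0 = Ti *\<^sub>v unit_vec d 0"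
      using col_mult2[OF Ti one_carrier_mat[of d], of 0] assms(1) right_mult_one_mat[OF Ti] by simp
    also have "\<dots> = w" unfolding Tw[symmetric]
      using assoc_mult_mat_vec[OF Ti Tc wc, symmetric] inv2 wc by simp
    finally show "col Ti 0 = vec d (\<lambda>i. - coeff V (d - 1 - i) / poly ?S 0)" unfolding w_def .
  qed
qed

end
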